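(* Let $G$ be a connected diamond-free CIS graph and let $n\ge 3$. Suppose $G$ has an induced subgraph $H$ with $V(H)=\{h_{i,j}: 1\le i,j\le n\}$ where, for $(i,j)\ne(k,l)$, $h_{i,j}h_{k,l}\in E(H)$ iff $i=k$ or $j=l$ (so $H\cong L(K_{n,n})$). Let $R_i=\{h_{i,j}:1\le j\le n\}$ and $L_j=\{h_{i,j}:1\le i\le n\}$. Then either all $2n$ cliques $R_1,\dots,R_n,L_1,\dots,L_n$ are maximal cliques of $G$, or none of them is a maximal clique of $G$. Moreover, if all of them are maximal cliques of $G$, then $G=H$.
   Context: A clique is strong if it intersects every inclusion-maximal stable set; a graph is CIS if every inclusion-maximal clique is strong. The diamond is $K_4$ minus one edge; diamond-free means no induced diamond. Maximal clique means inclusion-maximal. *)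

theory Defs
  imports Main
begin

definition simple_graph :: "'a set \<Rightarrow> ('a \<Rightarrow> 'a \<Rightarrow> bool) \<Rightarrow> bool" where
  "simple_graph V E \<longleftrightarrow> finite V \<and> (\<forall>x y. E x y \<longrightarrow> x \<in> V \<and> y \<in> V)
     \<and> (\<forall>x y. E x y \<longrightarrow> E y x) \<and> (\<forall>x. \<not> E x x)"

definition connected_graph :: "'a set \<Rightarrow> ('a \<Rightarrow> 'a \<Rightarrow> bool) \<Rightarrow> bool" where
  "connected_graph V E \<longleftrightarrow>
     (\<forall>x\<in>V. \<forall>y\<in>V. (x, y) \<in> {(u, v). u \<in> V \<and> v \<in> V \<and> E u v}\<^sup>*)"

definition is_clique :: "'a set \<Rightarrow> ('a \<Rightarrow> 'a \<Rightarrow> bool) \<Rightarrow> 'a set \<Rightarrow> bool" where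
  "is_clique V E C \<longleftrightarrow> C \<subseteq> V \<and> (\<forall>x\<in>C. \<forall>y\<in>C. x \<noteq> y \<longrightarrow> E x y)"

definition is_stable :: "'a set \<Rightarrow> ('a \<Rightarrow> 'a \<Rightarrow> bool) \<Rightarrow> 'a set \<Rightarrow> bool" where
  "is_stable V E S \<longleftrightarrow> S \<subseteq> V \<and> (\<forall>x\<in>S. \<forall>y\<in>S. x \<noteq> y \<longrightarrow> \<not> E x y)"

definition maximal_clique :: "'a set \<Rightarrow> ('a \<Rightarrow> 'a \<Rightarrow> bool) \<Rightarrow> 'a set \<Rightarrow> bool" where
  "maximal_clique V E C \<longleftrightarrow> is_clique V E C \<and> (\<forall>D. is_clique V E D \<and> C \<subseteq> D \<longrightarrow> D = C)"

definition maximal_stable :: "'a set \<Rightarrow> ('a \<Rightarrow> 'a \<Rightarrow> bool) \<Rightarrow> 'a set \<Rightarrow> bool" where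
  "maximal_stable V E S \<longleftrightarrow> is_stable V E S \<and> (\<forall>T. is_stable V E T \<and> S \<subseteq> T \<longrightarrow> T = S)"

definition strong_clique :: "'a set \<Rightarrow> ('a \<Rightarrow> 'a \<Rightarrow> bool) \<Rightarrow> 'a set \<Rightarrow> bool" where
  "strong_clique V E C \<longleftrightarrow> (\<forall>S. maximal_stable V E S \<longrightarrow> C \<inter> S \<noteq> {})"

definition CIS :: "'a set \<Rightarrow> ('a \<Rightarrow> 'a \<Rightarrow> bool) \<Rightarrow> bool" where
  "CIS V E \<longleftrightarrow> (\<forall>C. maximal_clique V E C \<longrightarrow> strong_clique V E C)"

definition diamond_free :: "'a set \<Rightarrow> ('a \<Rightarrow> 'a \<Rightarrow> bool) \<Rightarrow> bool" where
  "diamond_free V E \<longleftrightarrow> \<not> (\<exists>a\<in>V. \<exists>b\<in>V. \<exists>c\<in>V. \<exists>d\<in>V.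
      distinct [a, b, c, d] \<and> E a b \<and> E a c \<and> E a d \<and> E b c \<and> E b d \<and> \<not> E c d)"

end

theory Submission
  imports Defs
begin

lemma ex_max_stable:
  assumes "simple_graph V E" "is_stable V E S0"
  shows "\<exists>S. maximal_stable V E S \<and> S0 \<subseteq> S"
proof -
  have fin: "finite V" using assms(1) by (simp add: simple_graph_def)
  let ?P = "\<lambda>T. is_stable V E T \<and> S0 \<subseteq> T"
  have b: "\<forall>T. ?P T \<longrightarrow> card T < card V + 1"
    using card_mono[OF fin] by (auto simp: is_stable_def less_Suc_eq_le)
  obtain S where S: "?P S" "\<forall>T. ?P T \<longrightarrow> card T \<le> card S"
    using Lattices_Big.ex_has_greatest_nat[of ?P S0 card "card V + 1"] assms(2) b by blast
  show ?thesis
  proof (intro exI conjI)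
    show "maximal_stable V E S" unfolding maximal_stable_def
    proof (intro conjI allI impI)
      show "is_stable V E S" using S by simp
      fix T assume T: "is_stable V E T \<and> S \<subseteq> T"
      then have "card T \<le> card S" using S by auto
      moreover have "finite T" using T fin finite_subset by (auto simp: is_stable_def)
      ultimately show "T = S" using T card_seteq by blast
    qed
    show "S0 \<subseteq> S" using S by simp
  qed
qed

lemma no_dom:
  assumes "simple_graph V E" "CIS V E" "maximal_clique V E A" "is_stable V E S0"
    "\<forall>a\<in>A. \<exists>s\<in>S0. E a s"
  shows False
proof -
  obtain S where S: "maximal_stable V E S" "S0 \<subseteq> S" using ex_max_stable assms by blast
  have "strong_clique V E A" using assms(2,3) CIS_def by blast
  then obtain a where a: "a \<in> A" "a \<in> S" using S(1) strong_clique_def by blast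
  obtain s where s: "s \<in> S0" "E a s" using assms(5) a by blast
  moreover have "a \<noteq> s" using s(2) assms(1) simple_graph_def by metis
  ultimately show False using S a unfolding maximal_stable_def is_stable_def by blast
qed

lemma derangement:
  assumes "finite A" "card A \<ge> 2"
  shows "\<exists>\<tau>. bij_betw \<tau> A A \<and> (\<forall>a\<in>A. \<tau> a \<noteq> a)"
proof -
  let ?m = "card A"
  obtain e where e: "bij_betw e {0..<?m} A" using ex_bij_betw_nat_finite[OF assms(1)] by blast
  define s where "s = (\<lambda>i::nat. if i + 1 = ?m then 0 else i + 1)"
  have sin: "s ` {0..<?m} \<subseteq> {0..<?m}" using assms by (auto simp: s_def)
  have sinj: "inj_on s {0..<?m}"
    by (rule inj_onI) (auto simp: s_def split: if_splits)
  have sbij: "bij_betw s {0..<?m} {0..<?m}"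
    using sinj endo_inj_surj[OF _ sin sinj] by (simp add: bij_betw_def)
  have sfix: "\<forall>i\<in>{0..<?m}. s i \<noteq> i" using assms by (auto simp: s_def)
  define \<tau> where "\<tau> = e \<circ> s \<circ> inv_into {0..<?m} e"
  have tb: "bij_betw \<tau> A A" unfolding \<tau>_def
    using bij_betw_trans[OF bij_betw_inv_into[OF e] bij_betw_trans[OF sbij e]]
    by (simp add: comp_assoc)
  moreover have "\<forall>a\<in>A. \<tau> a \<noteq> a"
  proof
    fix a assume a: "a \<in> A"
    let ?i = "inv_into {0..<?m} e a"
    have i1: "?i \<in> {0..<?m}" using a e inv_into_into[of a e "{0..<?m}"] by (simp add: bij_betw_def)
    have i2: "e ?i = a" using a e f_inv_into_f[of a e "{0..<?m}"] by (simp add: bij_betw_def)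
    note i = i1 i2
    have si: "s ?i \<in> {0..<?m}" using sin i1 by blast
    show "\<tau> a \<noteq> a"
    proof
      assume "\<tau> a = a"
      then have "e (s ?i) = e ?i" using i by (simp add: \<tau>_def)
      then have "s ?i = ?i" using e i si by (auto simp: bij_betw_def inj_on_def)
      then show False using sfix i by blast
    qed
  qed
  ultimately show ?thesis by blast
qed

lemma extend_bij:
  assumes "finite A" "finite B" "card A = card B" "D \<subseteq> A" "inj_on f D" "f ` D \<subseteq> B"
  shows "\<exists>g. bij_betw g A B \<and> (\<forall>a\<in>D. g a = f a)"
proof -
  have fD: "finite D" using assms finite_subset by blast
  have "card (A - D) = card (B - f ` D)"
    using card_Diff_subset[OF fD assms(4)] card_Diff_subset[OF finite_imageI[OF fD] assms(6)]
      card_image[OF assms(5)] assms(3) by simp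
  then obtain k where k: "bij_betw k (A - D) (B - f ` D)"
    using bij_betw_iff_card assms(1,2) by (meson finite_Diff)
  define g where "g a = (if a \<in> D then f a else k a)" for a
  have g1: "bij_betw g D (f ` D)" using assms(5) unfolding g_def bij_betw_def inj_on_def by auto
  have g2: "bij_betw g (A - D) (B - f ` D)" using k bij_betw_cong[of "A-D" g k] g_def by auto
  have "bij_betw g (D \<union> (A - D)) (f ` D \<union> (B - f ` D))"
    by (rule bij_betw_combine[OF g1 g2]) auto
  moreover have "D \<union> (A - D) = A" "f ` D \<union> (B - f ` D) = B" using assms by auto
  ultimately show ?thesis using g_def by auto
qed

lemma matching:
  assumes "finite A" "finite B" "card A = card B" "card A \<ge> 2"
    "\<forall>a\<in>A. \<forall>b1\<in>B. \<forall>b2\<in>B. Q a b1 \<and> Q a b2 \<longrightarrow> b1 = b2"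
    "\<forall>b\<in>B. \<forall>a1\<in>A. \<forall>a2\<in>A. Q a1 b \<and> Q a2 b \<longrightarrow> a1 = a2"
  shows "\<exists>\<pi>. bij_betw \<pi> A B \<and> (\<forall>a\<in>A. \<not> Q a (\<pi> a))"
proof -
  define D where "D = {a\<in>A. \<exists>b\<in>B. Q a b}"
  define f where "f a = (SOME b. b \<in> B \<and> Q a b)" for a
  have fD: "\<forall>a\<in>D. f a \<in> B \<and> Q a (f a)"
  proof
    fix a assume "a \<in> D"
    then have "\<exists>b. b \<in> B \<and> Q a b" unfolding D_def by blast
    then show "f a \<in> B \<and> Q a (f a)" unfolding f_def by (rule someI_ex)
  qed
  have inj: "inj_on f D"
  proof (rule inj_onI)
    fix a1 a2 assume "a1 \<in> D" "a2 \<in> D" "f a1 = f a2"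
    then show "a1 = a2" using fD assms(6) unfolding D_def by (metis (no_types, lifting) mem_Collect_eq)
  qed
  have "D \<subseteq> A" "f ` D \<subseteq> B" using fD D_def by auto
  then obtain g where g: "bij_betw g A B" "\<forall>a\<in>D. g a = f a"
    using extend_bij[OF assms(1) assms(2) assms(3) _ inj] by blast
  obtain \<tau> where \<tau>: "bij_betw \<tau> A A" "\<forall>a\<in>A. \<tau> a \<noteq> a" using derangement[OF assms(1) assms(4)] by blast
  show ?thesis
  proof (intro exI conjI ballI)
    show "bij_betw (g \<circ> \<tau>) A B" using bij_betw_trans \<tau>(1) g(1) by blast
    fix a assume a: "a \<in> A"
    show "\<not> Q a ((g \<circ> \<tau>) a)"
    proof
      assume q: "Q a ((g \<circ> \<tau>) a)"
      have ta: "\<tau> a \<in> A" using \<tau>(1) a bij_betwE by blast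
      have gb: "g (\<tau> a) \<in> B" using g(1) ta bij_betwE by blast
      then have aD: "a \<in> D" using q D_def a by auto
      then have "g a = f a" "f a \<in> B" "Q a (f a)" using g fD by auto
      then have "g (\<tau> a) = g a" using assms(5) a gb q by auto
      then have "\<tau> a = a" using g(1) ta a unfolding bij_betw_def inj_on_def by metis
      then show False using \<tau>(2) a by blast
    qed
  qed
qed


lemma other_idx:
  assumes "n \<ge> (3::nat)" "c \<in> {1..n}"
  obtains m where "m \<in> {1..n}" "m \<noteq> c"
proof -
  have "(if c = 1 then 2 else 1) \<in> {1..n}" "(if c = 1 then 2 else (1::nat)) \<noteq> c" using assms by auto
  then show ?thesis using that by blast
qed

lemma diamondD:
  assumes "diamond_free V E" "a \<in> V" "b \<in> V" "c \<in> V" "d \<in> V" "distinct [a, b, c, d]"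
    "E a b" "E a c" "E a d" "E b c" "E b d" "\<not> E c d"
  shows False
  using assms unfolding diamond_free_def by blast

lemma hinjL:
  assumes "inj_on (\<lambda>(i, j). h i j) (N \<times> N)" "a \<in> N" "b \<in> N" "c \<in> N" "d \<in> N"
  shows "h a b = h c d \<longleftrightarrow> a = c \<and> b = d"
proof
  assume "h a b = h c d"
  then have "(a, b) = (c, d)" using inj_onD[OF assms(1), of "(a, b)" "(c, d)"] assms by simp
  then show "a = c \<and> b = d" by simp
qed simp

lemma part1:
  fixes h :: "nat \<Rightarrow> nat \<Rightarrow> 'a"
  assumes G: "simple_graph V E" "diamond_free V E" "CIS V E" "n \<ge> 3"
    and inj: "inj_on (\<lambda>(i, j). h i j) ({1..n} \<times> {1..n})"
    and hV: "\<forall>i\<in>{1..n}. \<forall>j\<in>{1..n}. h i j \<in> V"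
    and adj: "\<forall>i\<in>{1..n}. \<forall>j\<in>{1..n}. \<forall>k\<in>{1..n}. \<forall>l\<in>{1..n}.
           (i, j) \<noteq> (k, l) \<longrightarrow> (E (h i j) (h k l) \<longleftrightarrow> i = k \<or> j = l)"
    and i: "i \<in> {1..n}" and nm: "\<not> maximal_clique V E {h i j | j. j \<in> {1..n}}"
    and j: "j \<in> {1..n}"
  shows "\<not> maximal_clique V E {h k j | k. k \<in> {1..n}}"
proof
  assume mc: "maximal_clique V E {h k j | k. k \<in> {1..n}}"
  let ?N = "{1..n}"
  have hinj: "\<And>a b c d. a\<in>?N \<Longrightarrow> b\<in>?N \<Longrightarrow> c\<in>?N \<Longrightarrow> d\<in>?N \<Longrightarrow> h a b = h c d \<longleftrightarrow> a = c \<and> b = d"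
    using hinjL[OF inj] by blast
  have Esym: "\<And>u v. E u v \<Longrightarrow> E v u" using G(1) by (simp add: simple_graph_def)
  have Eirr: "\<And>u. \<not> E u u" using G(1) by (simp add: simple_graph_def)
  have EV: "\<And>u v. E u v \<Longrightarrow> u \<in> V \<and> v \<in> V" using G(1) by (simp add: simple_graph_def)
  have cl: "is_clique V E {h i j | j. j \<in> ?N}"
    unfolding is_clique_def
  proof (intro conjI ballI impI)
    show "{h i j | j. j \<in> ?N} \<subseteq> V" using hV i by auto
    fix u v assume "u \<in> {h i j | j. j \<in> ?N}" "v \<in> {h i j | j. j \<in> ?N}" "u \<noteq> v"
    then obtain j1 j2 where "j1 \<in> ?N" "j2 \<in> ?N" "u = h i j1" "v = h i j2" "j1 \<noteq> j2" by blast
    then show "E u v" using adj i by auto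
  qed
  then obtain D where D: "is_clique V E D" "{h i j | j. j \<in> ?N} \<subseteq> D" "D \<noteq> {h i j | j. j \<in> ?N}"
    using nm unfolding maximal_clique_def by blast
  then obtain x where x: "x \<in> D" "x \<notin> {h i j | j. j \<in> ?N}" by blast
  have xV: "x \<in> V" using D x by (auto simp: is_clique_def)
  have xR: "\<And>c. c \<in> ?N \<Longrightarrow> E x (h i c)"
  proof -
    fix c assume c: "c \<in> ?N"
    then have "h i c \<in> D" "x \<noteq> h i c" using D x by auto
    then show "E x (h i c)" using D x by (auto simp: is_clique_def)
  qed
  have xo: "\<And>r c. r \<in> ?N \<Longrightarrow> c \<in> ?N \<Longrightarrow> r \<noteq> i \<Longrightarrow> x \<noteq> h r c \<and> \<not> E x (h r c)"
  proof -
    fix r c assume r: "r \<in> ?N" and c: "c \<in> ?N" and ri: "r \<noteq> i"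
    obtain m where m: "m \<in> ?N" "m \<noteq> c" using other_idx[OF G(4) c] by blast
    have ne: "x \<noteq> h r c"
    proof
      assume "x = h r c"
      then have "E (h r c) (h i m)" using xR m by auto
      moreover have "E (h r c) (h i m) \<longleftrightarrow> r = i \<or> c = m" using adj r c i m ri by blast
      ultimately show False using ri m by blast
    qed
    moreover have "\<not> E x (h r c)"
    proof
      assume e: "E x (h r c)"
      have x1: "x \<noteq> h i c" "x \<noteq> h i m" using x(2) c m by blast+
      have "h i c \<noteq> h i m" "h i c \<noteq> h r c" "h i m \<noteq> h r c"
        using hinj[of i c i m] hinj[of i c r c] hinj[of i m r c] i r ri c m by auto
      then have dis: "distinct [x, h i c, h i m, h r c]" using x1 ne by simp
      have e1: "E x (h i c)" "E x (h i m)" using xR c m by auto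
      have e2: "E (h i c) (h i m)" using adj i c m by auto
      have e3: "E (h i c) (h r c)" using adj i r c ri by auto
      have e4: "\<not> E (h i m) (h r c)" using adj i r c m ri by auto
      have vs: "h i c \<in> V" "h i m \<in> V" "h r c \<in> V" using hV i r c m by auto
      show False by (rule diamondD[OF G(2) xV vs dis e1 e e2 e3 e4])
    qed
    ultimately show "x \<noteq> h r c \<and> \<not> E x (h r c)" by blast
  qed
  have cardA: "card (?N - {i}) = n - 1" using i by simp
  have cardB: "card (?N - {j}) = n - 1" using j by simp
  obtain \<pi> where \<pi>: "bij_betw \<pi> (?N - {i}) (?N - {j})"
  proof -
    have c2: "card (?N - {i}) \<ge> 2" using cardA G(4) by simp
    have "\<exists>\<pi>. bij_betw \<pi> (?N - {i}) (?N - {j}) \<and> (\<forall>a\<in>?N - {i}. \<not> False)"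
      by (rule matching[of "?N - {i}" "?N - {j}" "\<lambda>_ _. False", OF _ _ _ c2]) (use cardA cardB in simp_all)
    then show ?thesis using that by blast
  qed
  have \<pi>in: "\<And>r. r \<in> ?N - {i} \<Longrightarrow> \<pi> r \<in> ?N - {j}" using \<pi> bij_betwE by blast
  have \<pi>inj: "\<And>r s. r \<in> ?N - {i} \<Longrightarrow> s \<in> ?N - {i} \<Longrightarrow> \<pi> r = \<pi> s \<Longrightarrow> r = s"
    using \<pi> unfolding bij_betw_def inj_on_def by blast
  define S0 where "S0 = insert x ((\<lambda>r. h r (\<pi> r)) ` (?N - {i}))"
  have st: "is_stable V E S0"
    unfolding is_stable_def
  proof (intro conjI ballI impI)
    have "\<forall>r\<in>?N-{i}. h r (\<pi> r) \<in> V" using hV \<pi>in by blast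
    then show "S0 \<subseteq> V" using xV by (auto simp: S0_def)
    fix u v assume u: "u \<in> S0" and v: "v \<in> S0" and uv: "u \<noteq> v"
    show "\<not> E u v"
    proof (cases "u = x")
      case True
      then obtain r where "r \<in> ?N - {i}" "v = h r (\<pi> r)" using v uv True unfolding S0_def by blast
      then show ?thesis using True xo[of r "\<pi> r"] \<pi>in by auto
    next
      case False
      then obtain r where r: "r \<in> ?N - {i}" "u = h r (\<pi> r)" using u False unfolding S0_def by blast
      show ?thesis
      proof (cases "v = x")
        case True
        then show ?thesis using r xo[of r "\<pi> r"] \<pi>in Esym by blast
      next
        case False
        then obtain s where s: "s \<in> ?N - {i}" "v = h s (\<pi> s)" using v False unfolding S0_def by blast
        have "r \<noteq> s" using r s uv by auto
        moreover have "\<pi> r \<noteq> \<pi> s" using \<pi>inj r s \<open>r \<noteq> s\<close> by blast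
        ultimately show ?thesis using adj r s \<pi>in[OF r(1)] \<pi>in[OF s(1)] by auto
      qed
    qed
  qed
  have dom: "\<forall>a\<in>{h k j | k. k \<in> ?N}. \<exists>s\<in>S0. E a s"
  proof
    fix a assume "a \<in> {h k j | k. k \<in> ?N}"
    then obtain k where k: "k \<in> ?N" "a = h k j" by blast
    show "\<exists>s\<in>S0. E a s"
    proof (cases "k = i")
      case True
      then show ?thesis using xR[OF j] Esym k by (auto simp: S0_def)
    next
      case False
      then have kk: "k \<in> ?N - {i}" using k by auto
      then have "E (h k j) (h k (\<pi> k))" using adj k j \<pi>in[OF kk] by auto
      then show ?thesis using k kk by (auto simp: S0_def)
    qed
  qed
  show False using no_dom[OF G(1) G(3) mc st dom] .
qed


lemma rowlemma:
  fixes h :: "nat \<Rightarrow> nat \<Rightarrow> 'a"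
  assumes G: "simple_graph V E" "diamond_free V E"
    and inj: "inj_on (\<lambda>(i, j). h i j) ({1..n} \<times> {1..n})"
    and hV: "\<forall>i\<in>{1..n}. \<forall>j\<in>{1..n}. h i j \<in> V"
    and adj: "\<forall>i\<in>{1..n}. \<forall>j\<in>{1..n}. \<forall>k\<in>{1..n}. \<forall>l\<in>{1..n}.
           (i, j) \<noteq> (k, l) \<longrightarrow> (E (h i j) (h k l) \<longleftrightarrow> i = k \<or> j = l)"
    and r: "r \<in> {1..n}" and mc: "maximal_clique V E {h r j | j. j \<in> {1..n}}"
    and y: "y \<in> V" "y \<notin> {h r j | j. j \<in> {1..n}}"
    and c: "c1 \<in> {1..n}" "c2 \<in> {1..n}" "c1 \<noteq> c2" "E y (h r c1)" "E y (h r c2)"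
  shows False
proof -
  let ?N = "{1..n}"
  let ?R = "{h r j | j. j \<in> ?N}"
  have hinj: "\<And>a b c d. a\<in>?N \<Longrightarrow> b\<in>?N \<Longrightarrow> c\<in>?N \<Longrightarrow> d\<in>?N \<Longrightarrow> h a b = h c d \<longleftrightarrow> a = c \<and> b = d"
    using hinjL[OF inj] by blast
  have Esym: "\<And>u v. E u v \<Longrightarrow> E v u" using G(1) by (simp add: simple_graph_def)
  have "\<not> is_clique V E (insert y ?R)"
  proof
    assume "is_clique V E (insert y ?R)"
    then have "insert y ?R = ?R" using mc unfolding maximal_clique_def by blast
    then show False using y by blast
  qed
  have Rcl: "is_clique V E ?R" using mc unfolding maximal_clique_def by blast
  have "\<exists>p\<in>?N. \<not> E y (h r p)"
  proof (rule ccontr)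
    assume "\<not> (\<exists>p\<in>?N. \<not> E y (h r p))"
    then have all: "\<forall>p\<in>?N. E y (h r p)" by blast
    have "is_clique V E (insert y ?R)" unfolding is_clique_def
    proof (intro conjI ballI impI)
      show "insert y ?R \<subseteq> V" using y(1) Rcl unfolding is_clique_def by blast
      fix u v assume u: "u \<in> insert y ?R" and v: "v \<in> insert y ?R" and uv: "u \<noteq> v"
      show "E u v"
      proof (cases "u = y")
        case True
        then obtain q where "q \<in> ?N" "v = h r q" using v uv by blast
        then show ?thesis using all True by blast
      next
        case False
        then have uR: "u \<in> ?R" using u by blast
        show ?thesis
        proof (cases "v = y")
          case True
          obtain q where "q \<in> ?N" "u = h r q" using uR by blast
          then show ?thesis using all True Esym by blast
        next
          case False
          then have "v \<in> ?R" using v by blast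
          then show ?thesis using uR uv Rcl unfolding is_clique_def by blast
        qed
      qed
    qed
    then show False using \<open>\<not> is_clique V E (insert y ?R)\<close> by blast
  qed
  then obtain p where p: "p \<in> ?N" "\<not> E y (h r p)" by blast
  have pc: "p \<noteq> c1" "p \<noteq> c2" using p c by auto
  have y1: "y \<noteq> h r c1" "y \<noteq> h r c2" "y \<noteq> h r p" using y(2) c p by blast+
  have "h r c1 \<noteq> h r c2" "h r c1 \<noteq> h r p" "h r c2 \<noteq> h r p"
    using hinj[of r c1 r c2] hinj[of r c1 r p] hinj[of r c2 r p] r c p pc by auto
  then have dis: "distinct [h r c1, h r c2, y, h r p]" using y1 by auto
  have e1: "E (h r c1) (h r c2)" using adj r c by auto
  have e2: "E (h r c1) y" "E (h r c2) y" using c Esym by auto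
  have e3: "E (h r c1) (h r p)" "E (h r c2) (h r p)" using adj r c p pc by auto
  have vs: "h r c1 \<in> V" "h r c2 \<in> V" "h r p \<in> V" using hV r c p by auto
  show False by (rule diamondD[OF G(2) vs(1,2) y(1) vs(3) dis e1 e2(1) e3(1) e2(2) e3(2) p(2)])
qed

lemma cross:
  assumes "(a, b) \<in> Rel\<^sup>*" "a \<in> H" "b \<notin> H"
  shows "\<exists>u v. (u, v) \<in> Rel \<and> u \<in> H \<and> v \<notin> H"
  using assms by (induction rule: rtrancl_induct) auto

theorem lemma6:
  fixes V :: "'a set" and E :: "'a \<Rightarrow> 'a \<Rightarrow> bool" and n :: nat and h :: "nat \<Rightarrow> nat \<Rightarrow> 'a"
  assumes "simple_graph V E" and "connected_graph V E" and "diamond_free V E" and "CIS V E"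
    and "n \<ge> 3"
    and "inj_on (\<lambda>(i, j). h i j) ({1..n} \<times> {1..n})"
    and "\<forall>i\<in>{1..n}. \<forall>j\<in>{1..n}. h i j \<in> V"
    and "\<forall>i\<in>{1..n}. \<forall>j\<in>{1..n}. \<forall>k\<in>{1..n}. \<forall>l\<in>{1..n}.
           (i, j) \<noteq> (k, l) \<longrightarrow> (E (h i j) (h k l) \<longleftrightarrow> i = k \<or> j = l)"
  shows "(((\<forall>i\<in>{1..n}. maximal_clique V E {h i j | j. j \<in> {1..n}})
           \<and> (\<forall>j\<in>{1..n}. maximal_clique V E {h i j | i. i \<in> {1..n}}))
       \<or> ((\<forall>i\<in>{1..n}. \<not> maximal_clique V E {h i j | j. j \<in> {1..n}})
           \<and> (\<forall>j\<in>{1..n}. \<not> maximal_clique V E {h i j | i. i \<in> {1..n}}))) \<and>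
       ((\<forall>i\<in>{1..n}. maximal_clique V E {h i j | j. j \<in> {1..n}})
           \<and> (\<forall>j\<in>{1..n}. maximal_clique V E {h i j | i. i \<in> {1..n}})
         \<longrightarrow> V = {h i j | i j. i \<in> {1..n} \<and> j \<in> {1..n}})"
proof -
  note G = assms(1) assms(3) assms(4) assms(5)
  let ?N = "{1..n}"
  have inj': "inj_on (\<lambda>(i, j). (\<lambda>a b. h b a) i j) (?N \<times> ?N)"
  proof (rule inj_onI)
    fix p q assume *: "p \<in> ?N \<times> ?N" "q \<in> ?N \<times> ?N"
      "(\<lambda>(i, j). (\<lambda>a b. h b a) i j) p = (\<lambda>(i, j). (\<lambda>a b. h b a) i j) q"
    obtain a b c d where p: "p = (a, b)" and q: "q = (c, d)" by (cases p, cases q) auto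
    have "(b, a) = (d, c)" using inj_onD[OF assms(6), of "(b, a)" "(d, c)"] * p q by auto
    then show "p = q" using p q by simp
  qed
  have hV': "\<forall>i\<in>?N. \<forall>j\<in>?N. (\<lambda>a b. h b a) i j \<in> V" using assms(7) by auto
  have adj': "\<forall>i\<in>?N. \<forall>j\<in>?N. \<forall>k\<in>?N. \<forall>l\<in>?N.
           (i, j) \<noteq> (k, l) \<longrightarrow> (E ((\<lambda>a b. h b a) i j) ((\<lambda>a b. h b a) k l) \<longleftrightarrow> i = k \<or> j = l)"
  proof (intro ballI impI)
    fix i j k l assume *: "i \<in> ?N" "j \<in> ?N" "k \<in> ?N" "l \<in> ?N" "(i, j) \<noteq> (k, l)"
    then have "(j, i) \<noteq> (l, k)" by auto
    then have "E (h j i) (h l k) \<longleftrightarrow> j = l \<or> i = k" using assms(8) * by blast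
    then show "E ((\<lambda>a b. h b a) i j) ((\<lambda>a b. h b a) k l) \<longleftrightarrow> i = k \<or> j = l" by auto
  qed
  have P1: "\<And>i j. i \<in> ?N \<Longrightarrow> j \<in> ?N \<Longrightarrow> \<not> maximal_clique V E {h i j | j. j \<in> ?N}
      \<Longrightarrow> \<not> maximal_clique V E {h i j | i. i \<in> ?N}"
    by (rule part1[OF G assms(6) assms(7) assms(8)])
  have P2: "\<And>i j. i \<in> ?N \<Longrightarrow> j \<in> ?N \<Longrightarrow> \<not> maximal_clique V E {h i j | i. i \<in> ?N}
      \<Longrightarrow> \<not> maximal_clique V E {h i j | j. j \<in> ?N}"
  proof -
    fix i j assume a: "i \<in> ?N" "j \<in> ?N" "\<not> maximal_clique V E {h i j | i. i \<in> ?N}"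
    have "\<not> maximal_clique V E {(\<lambda>a b. h b a) k i | k. k \<in> ?N}"
      by (rule part1[OF G inj' hV' adj' a(2) _ a(1)]) (use a(3) in simp)
    then show "\<not> maximal_clique V E {h i j | j. j \<in> ?N}" by simp
  qed
  have one: "1 \<in> ?N" using assms(5) by auto
  have A: "((\<forall>i\<in>?N. maximal_clique V E {h i j | j. j \<in> ?N})
           \<and> (\<forall>j\<in>?N. maximal_clique V E {h i j | i. i \<in> ?N}))
       \<or> ((\<forall>i\<in>?N. \<not> maximal_clique V E {h i j | j. j \<in> ?N})
           \<and> (\<forall>j\<in>?N. \<not> maximal_clique V E {h i j | i. i \<in> ?N}))"
  proof (cases "(\<forall>i\<in>?N. maximal_clique V E {h i j | j. j \<in> ?N})
           \<and> (\<forall>j\<in>?N. maximal_clique V E {h i j | i. i \<in> ?N})")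
    case True
    then show ?thesis by blast
  next
    case False
    then have "\<forall>j\<in>?N. \<not> maximal_clique V E {h i j | i. i \<in> ?N}"
      using P1 P2 one by blast
    moreover then have "\<forall>i\<in>?N. \<not> maximal_clique V E {h i j | j. j \<in> ?N}"
      using P2 one by blast
    ultimately show ?thesis by blast
  qed
  have B: "V = {h i j | i j. i \<in> ?N \<and> j \<in> ?N}"
    if allR: "\<forall>i\<in>?N. maximal_clique V E {h i j | j. j \<in> ?N}"
      and allL: "\<forall>j\<in>?N. maximal_clique V E {h i j | i. i \<in> ?N}"
  proof (rule ccontr)
    let ?H = "{h i j | i j. i \<in> ?N \<and> j \<in> ?N}"
    assume ne: "V \<noteq> ?H"
    have HV: "?H \<subseteq> V" using assms(7) by auto
    then obtain y0 where y0: "y0 \<in> V" "y0 \<notin> ?H" using ne by blast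
    let ?Rel = "{(u, v). u \<in> V \<and> v \<in> V \<and> E u v}"
    have "(h 1 1, y0) \<in> ?Rel\<^sup>*" using assms(2) y0 HV one unfolding connected_graph_def by blast
    moreover have "h 1 1 \<in> ?H" using one by blast
    ultimately obtain u y where uy: "(u, y) \<in> ?Rel" "u \<in> ?H" "y \<notin> ?H"
      using cross[of "h 1 1" y0 ?Rel ?H] y0 by blast
    then obtain k l where kl: "k \<in> ?N" "l \<in> ?N" "u = h k l" by blast
    have Esym: "\<And>u v. E u v \<Longrightarrow> E v u" using G(1) by (simp add: simple_graph_def)
    have yV: "y \<in> V" and Eyu: "E y (h k l)" using uy kl Esym by auto
    have rowU: "\<And>r c1 c2. r \<in> ?N \<Longrightarrow> c1 \<in> ?N \<Longrightarrow> c2 \<in> ?N \<Longrightarrow> E y (h r c1) \<Longrightarrow> E y (h r c2) \<Longrightarrow> c1 = c2"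
    proof (rule ccontr)
      fix r c1 c2 assume *: "r \<in> ?N" "c1 \<in> ?N" "c2 \<in> ?N" "E y (h r c1)" "E y (h r c2)" "c1 \<noteq> c2"
      have yR: "y \<notin> {h r j | j. j \<in> ?N}" using uy * by blast
      have mcR: "maximal_clique V E {h r j | j. j \<in> ?N}" using allR *(1) by blast
      show False by (rule rowlemma[OF G(1) G(2) assms(6) assms(7) assms(8) *(1) mcR yV yR *(2) *(3) *(6) *(4) *(5)])
    qed
    have colU: "\<And>c r1 r2. c \<in> ?N \<Longrightarrow> r1 \<in> ?N \<Longrightarrow> r2 \<in> ?N \<Longrightarrow> E y (h r1 c) \<Longrightarrow> E y (h r2 c) \<Longrightarrow> r1 = r2"
    proof (rule ccontr)
      fix c r1 r2 assume *: "c \<in> ?N" "r1 \<in> ?N" "r2 \<in> ?N" "E y (h r1 c)" "E y (h r2 c)" "r1 \<noteq> r2"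
      have yL: "y \<notin> {(\<lambda>a b. h b a) c i | i. i \<in> ?N}" using uy * by blast
      have mcL: "maximal_clique V E {(\<lambda>a b. h b a) c i | i. i \<in> ?N}" using allL *(1) by simp
      show False by (rule rowlemma[OF G(1) G(2) inj' hV' adj' *(1) mcL yV yL *(2) *(3) *(6)]) (use * in simp_all)
    qed
    have cardA: "card (?N - {k}) = n - 1" using kl by simp
    have cardB: "card (?N - {l}) = n - 1" using kl by simp
    obtain \<pi> where \<pi>: "bij_betw \<pi> (?N - {k}) (?N - {l})" "\<forall>a\<in>?N - {k}. \<not> E y (h a (\<pi> a))"
    proof -
      have m1: "\<forall>a\<in>?N - {k}. \<forall>b1\<in>?N - {l}. \<forall>b2\<in>?N - {l}. E y (h a b1) \<and> E y (h a b2) \<longrightarrow> b1 = b2"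
        using rowU by (meson DiffD1)
      have m2: "\<forall>b\<in>?N - {l}. \<forall>a1\<in>?N - {k}. \<forall>a2\<in>?N - {k}. E y (h a1 b) \<and> E y (h a2 b) \<longrightarrow> a1 = a2"
        using colU by (meson DiffD1)
      have "card (?N - {k}) \<ge> 2" using cardA G(4) by simp
      then have "\<exists>\<pi>. bij_betw \<pi> (?N - {k}) (?N - {l}) \<and> (\<forall>a\<in>?N - {k}. \<not> E y (h a (\<pi> a)))"
        by (intro matching[of "?N - {k}" "?N - {l}" "\<lambda>a b. E y (h a b)", OF _ _ _ _ m1 m2]) (use cardA cardB in simp_all)
      then show ?thesis using that by blast
    qed
    have \<pi>in: "\<And>r. r \<in> ?N - {k} \<Longrightarrow> \<pi> r \<in> ?N - {l}" using \<pi>(1) bij_betwE by blast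
    have \<pi>inj: "\<And>r s. r \<in> ?N - {k} \<Longrightarrow> s \<in> ?N - {k} \<Longrightarrow> \<pi> r = \<pi> s \<Longrightarrow> r = s"
      using \<pi>(1) unfolding bij_betw_def inj_on_def by blast
    define S0 where "S0 = insert y ((\<lambda>r. h r (\<pi> r)) ` (?N - {k}))"
    have st: "is_stable V E S0"
      unfolding is_stable_def
    proof (intro conjI ballI impI)
      have "\<forall>r\<in>?N-{k}. h r (\<pi> r) \<in> V" using assms(7) \<pi>in by blast
      then show "S0 \<subseteq> V" using yV by (auto simp: S0_def)
      fix u v assume u: "u \<in> S0" and v: "v \<in> S0" and uv: "u \<noteq> v"
      show "\<not> E u v"
      proof (cases "u = y")
        case True
        then obtain r where "r \<in> ?N - {k}" "v = h r (\<pi> r)" using v uv True unfolding S0_def by blast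
        then show ?thesis using True \<pi>(2) by auto
      next
        case False
        then obtain r where r: "r \<in> ?N - {k}" "u = h r (\<pi> r)" using u False unfolding S0_def by blast
        show ?thesis
        proof (cases "v = y")
          case True
          then show ?thesis using r \<pi>(2) Esym by blast
        next
          case False
          then obtain s where s: "s \<in> ?N - {k}" "v = h s (\<pi> s)" using v False unfolding S0_def by blast
          have "r \<noteq> s" using r s uv by auto
          moreover have "\<pi> r \<noteq> \<pi> s" using \<pi>inj r s \<open>r \<noteq> s\<close> by blast
          ultimately show ?thesis using assms(8) r s \<pi>in[OF r(1)] \<pi>in[OF s(1)] by auto
        qed
      qed
    qed
    have dom: "\<forall>a\<in>{h k j | j. j \<in> ?N}. \<exists>s\<in>S0. E a s"
    proof
      fix a assume "a \<in> {h k j | j. j \<in> ?N}"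
      then obtain c where c: "c \<in> ?N" "a = h k c" by blast
      show "\<exists>s\<in>S0. E a s"
      proof (cases "c = l")
        case True
        then show ?thesis using Eyu Esym c by (auto simp: S0_def)
      next
        case False
        then have "c \<in> ?N - {l}" using c by auto
        then obtain r where r: "r \<in> ?N - {k}" "\<pi> r = c" using \<pi>(1) by (metis bij_betw_def imageE)
        then have "E (h k c) (h r c)" using assms(8) kl c by auto
        then show ?thesis using r c by (auto simp: S0_def)
      qed
    qed
    have "maximal_clique V E {h k j | j. j \<in> ?N}" using allR kl(1) by blast
    then show False using no_dom[OF G(1) G(3) _ st dom] by blast
  qed
  show ?thesis using A B by blast
qed

end
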